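(* Let $G$ be a finite primitive permutation group on $\Omega$ of diagonal type, and let $p$ be a prime dividing $|\Omega|$. Then $G$ has a subdegree divisible by $p$.
   Context: $G$ is of diagonal type if its socle is $N=T^k$ for a nonabelian simple group $T$ and $k\ge 2$, and the stabiliser $N_\alpha$ of a point $\alpha\in\Omega$ is a full diagonal subgroup of $N$, i.e. of the form $\{(t^{\varphi_1},\dots,t^{\varphi_k}) : t\in T\}$ for some automorphisms $\varphi_i$ of $T$; then $|\Omega|=|T|^{k-1}$. A subdegree is the size of an orbit of a point stabiliser. *)

theory Defs
  imports "HOL-Algebra.Algebra"
begin

definition PG :: "'a set \<Rightarrow> ('a \<Rightarrow> 'a) set \<Rightarrow> ('a \<Rightarrow> 'a) monoid" where
  "PG \<Omega> G = (BijGroup \<Omega>)\<lparr>carrier := G\<rparr>"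

definition perm_group :: "'a set \<Rightarrow> ('a \<Rightarrow> 'a) set \<Rightarrow> bool" where
  "perm_group \<Omega> G \<longleftrightarrow> subgroup G (BijGroup \<Omega>)"

definition transitive_on :: "'a set \<Rightarrow> ('a \<Rightarrow> 'a) set \<Rightarrow> bool" where
  "transitive_on \<Omega> G \<longleftrightarrow> \<Omega> \<noteq> {} \<and> (\<forall>\<alpha>\<in>\<Omega>. \<forall>\<beta>\<in>\<Omega>. \<exists>g\<in>G. g \<alpha> = \<beta>)"

definition is_block :: "'a set \<Rightarrow> ('a \<Rightarrow> 'a) set \<Rightarrow> 'a set \<Rightarrow> bool" where
  "is_block \<Omega> G B \<longleftrightarrow> B \<subseteq> \<Omega> \<and> (\<forall>g\<in>G. g ` B = B \<or> g ` B \<inter> B = {})"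

definition primitive :: "'a set \<Rightarrow> ('a \<Rightarrow> 'a) set \<Rightarrow> bool" where
  "primitive \<Omega> G \<longleftrightarrow> perm_group \<Omega> G \<and> transitive_on \<Omega> G \<and>
     (\<forall>B. is_block \<Omega> G B \<and> B \<noteq> {} \<longrightarrow> card B = 1 \<or> B = \<Omega>)"

definition minimal_normal :: "('g, 'c) monoid_scheme \<Rightarrow> 'g set \<Rightarrow> bool" where
  "minimal_normal H N \<longleftrightarrow> N \<lhd> H \<and> N \<noteq> {\<one>\<^bsub>H\<^esub>} \<and>
     (\<forall>M. M \<lhd> H \<longrightarrow> M \<subseteq> N \<longrightarrow> M = {\<one>\<^bsub>H\<^esub>} \<or> M = N)"

definition socle :: "('g, 'c) monoid_scheme \<Rightarrow> 'g set" where
  "socle H = generate H (\<Union>{N. minimal_normal H N})"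

text \<open>G is of diagonal type with respect to the simple group T and k: its socle N is
  isomorphic (via f) to T^k, T nonabelian simple, k \<ge> 2, and for a point \<alpha> the
  stabiliser N_\<alpha> is mapped by f onto a full diagonal subgroup
  {(t^\<phi>_1, ..., t^\<phi>_k) : t \<in> T} with automorphisms \<phi>_i of T.\<close>
definition diagonal_type :: "'a set \<Rightarrow> ('a \<Rightarrow> 'a) set \<Rightarrow> ('b, 'c) monoid_scheme \<Rightarrow> nat \<Rightarrow> bool" where
  "diagonal_type \<Omega> G T k \<longleftrightarrow>
     simple_group T \<and> \<not> comm_group T \<and> 2 \<le> k \<and>
     (\<exists>f. f \<in> iso ((PG \<Omega> G)\<lparr>carrier := socle (PG \<Omega> G)\<rparr>) (product_group {..<k} (\<lambda>_. T)) \<and>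
       (\<exists>\<alpha>\<in>\<Omega>. \<exists>\<phi>. (\<forall>i<k. \<phi> i \<in> iso T T) \<and>
          f ` {g \<in> socle (PG \<Omega> G). g \<alpha> = \<alpha>} = {(\<lambda>i\<in>{..<k}. \<phi> i t) | t. t \<in> carrier T}))"

definition subdegree :: "('a \<Rightarrow> 'a) set \<Rightarrow> 'a \<Rightarrow> 'a \<Rightarrow> nat" where
  "subdegree G \<alpha> \<beta> = card {g \<beta> | g. g \<in> G \<and> g \<alpha> = \<alpha>}"

end

theory Submission
  imports Defs
begin

lemma card_insert_Suc_le: "card (insert x S) \<le> Suc (card S)"
  by (cases "finite S") (auto simp: card_insert_if)

lemma (in group) inv_cancel_left1 [simp]:
  "x \<in> carrier G \<Longrightarrow> y \<in> carrier G \<Longrightarrow> inv x \<otimes> (x \<otimes> y) = y"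
  by (simp add: m_assoc[symmetric])

lemma (in group) inv_cancel_left2 [simp]:
  "x \<in> carrier G \<Longrightarrow> y \<in> carrier G \<Longrightarrow> x \<otimes> (inv x \<otimes> y) = y"
  by (simp add: m_assoc[symmetric])

lemma (in group) conj_union:
  assumes fin: "finite (carrier G)" and H: "subgroup H G"
    and cov: "\<forall>y\<in>carrier G. \<exists>g\<in>carrier G. inv g \<otimes> y \<otimes> g \<in> H"
  shows "H = carrier G"
proof -
  define K where "K g = {inv g \<otimes> h \<otimes> g | h. h \<in> H}" for g
  have Hc: "H \<subseteq> carrier G" using H subgroup.subset by blast
  have Kc: "K g \<subseteq> carrier G" if "g \<in> carrier G" for g
    using that Hc unfolding K_def by blast
  have oneK: "\<one> \<in> K g" if "g \<in> carrier G" for g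
  proof -
    have "inv g \<otimes> \<one> \<otimes> g = \<one>" using that by simp
    thus ?thesis unfolding K_def using subgroup.one_closed[OF H] by force
  qed
  have cardK: "card (K g) \<le> card H" for g
  proof -
    have "K g = (\<lambda>h. inv g \<otimes> h \<otimes> g) ` H" unfolding K_def by blast
    thus ?thesis using fin Hc finite_subset card_image_le by metis
  qed
  have covK: "carrier G = (\<Union>g\<in>carrier G. K g)"
  proof
    show "carrier G \<subseteq> (\<Union>g\<in>carrier G. K g)"
    proof
      fix y assume y: "y \<in> carrier G"
      then obtain g where g: "g \<in> carrier G" "inv g \<otimes> y \<otimes> g \<in> H" using cov by blast
      have "y = inv (inv g) \<otimes> (inv g \<otimes> y \<otimes> g) \<otimes> inv g"
        using g y by (simp add: m_assoc)
      hence "y \<in> K (inv g)" unfolding K_def using g by blast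
      thus "y \<in> (\<Union>g\<in>carrier G. K g)" using g by blast
    qed
  qed (use Kc in blast)
  define F where "F R = K (SOME g. g \<in> carrier G \<and> H #> g = R)" for R
  have KF: "K ` carrier G \<subseteq> F ` (rcosets H)"
  proof
    fix A assume "A \<in> K ` carrier G"
    then obtain g where g: "g \<in> carrier G" "A = K g" by blast
    have R: "H #> g \<in> rcosets H" using g unfolding RCOSETS_def by blast
    have ex: "\<exists>g'. g' \<in> carrier G \<and> H #> g' = H #> g" using g by blast
    define g' where "g' = (SOME g'. g' \<in> carrier G \<and> H #> g' = H #> g)"
    have g': "g' \<in> carrier G" "H #> g' = H #> g" using someI_ex[OF ex] unfolding g'_def by auto
    have "g \<in> H #> g" using g H by (simp add: rcos_self)
    hence "g \<in> H #> g'" using g' by simp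
    then obtain h0 where h0: "h0 \<in> H" "g = h0 \<otimes> g'" unfolding r_coset_def by blast
    have h0c: "h0 \<in> carrier G" using h0 Hc by blast
    have "K g = K g'"
    proof
      show "K g \<subseteq> K g'"
      proof
        fix z assume "z \<in> K g"
        then obtain h where h: "h \<in> H" "z = inv g \<otimes> h \<otimes> g" unfolding K_def by blast
        have hc: "h \<in> carrier G" using h Hc by blast
        have "z = inv g' \<otimes> (inv h0 \<otimes> h \<otimes> h0) \<otimes> g'"
          using h h0 h0c hc g' by (simp add: inv_mult_group m_assoc)
        moreover have "inv h0 \<otimes> h \<otimes> h0 \<in> H"
          using h h0 H by (simp add: subgroup.m_closed subgroup.m_inv_closed)
        ultimately show "z \<in> K g'" unfolding K_def by blast
      qed
    next
      show "K g' \<subseteq> K g"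
      proof
        fix z assume "z \<in> K g'"
        then obtain h where h: "h \<in> H" "z = inv g' \<otimes> h \<otimes> g'" unfolding K_def by blast
        have hc: "h \<in> carrier G" using h Hc by blast
        have "z = inv g \<otimes> (h0 \<otimes> h \<otimes> inv h0) \<otimes> g"
          using h h0 h0c hc g' by (simp add: inv_mult_group m_assoc)
        moreover have "h0 \<otimes> h \<otimes> inv h0 \<in> H"
          using h h0 H by (simp add: subgroup.m_closed subgroup.m_inv_closed)
        ultimately show "z \<in> K g" unfolding K_def by blast
      qed
    qed
    hence "A = F (H #> g)" unfolding F_def g'_def[symmetric] using g by simp
    thus "A \<in> F ` (rcosets H)" using R by blast
  qed
  define m where "m = card (rcosets H)"
  have lag: "m * card H = order G" unfolding m_def using lagrange[OF H] .
  have finR: "finite (rcosets H)"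
    using fin unfolding RCOSETS_def by (simp add: r_coset_def)
  have cardKG: "card (K ` carrier G) \<le> m"
  proof -
    have "card (K ` carrier G) \<le> card (F ` (rcosets H))"
      using KF finR by (intro card_mono) auto
    also have "\<dots> \<le> m" unfolding m_def using finR by (rule card_image_le)
    finally show ?thesis .
  qed
  have "carrier G \<subseteq> insert \<one> (\<Union>A\<in>K ` carrier G. A - {\<one>})"
    using covK by blast
  hence "order G \<le> card (insert \<one> (\<Union>A\<in>K ` carrier G. A - {\<one>}))"
    unfolding order_def using fin Kc
    by (intro card_mono) (auto intro: finite_subset)
  also have "\<dots> \<le> Suc (card (\<Union>A\<in>K ` carrier G. A - {\<one>}))"
    by (rule card_insert_Suc_le)
  also have "card (\<Union>A\<in>K ` carrier G. A - {\<one>}) \<le> (\<Sum>A\<in>K ` carrier G. card (A - {\<one>}))"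
    using fin by (intro card_UN_le) auto
  also have "\<dots> \<le> card (K ` carrier G) * (card H - 1)"
  proof -
    have "\<And>A. A \<in> K ` carrier G \<Longrightarrow> card (A - {\<one>}) \<le> card H - 1"
    proof -
      fix A assume "A \<in> K ` carrier G"
      then obtain g where g: "g \<in> carrier G" "A = K g" by blast
      have "finite A" using g Kc fin finite_subset by metis
      hence "card (A - {\<one>}) = card A - 1" using oneK g by simp
      moreover have "card A \<le> card H" using cardK g by simp
      ultimately show "card (A - {\<one>}) \<le> card H - 1" by linarith
    qed
    from sum_bounded_above[of "K ` carrier G" "\<lambda>A. card (A - {\<one>})", OF this]
    show ?thesis by simp
  qed
  also have "\<dots> \<le> m * (card H - 1)" using cardKG by simp
  finally have ineq: "order G \<le> Suc (m * (card H - 1))" by simp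
  have hpos: "card H \<ge> 1"
    using subgroup.one_closed[OF H] fin Hc finite_subset
    by (metis One_nat_def Suc_leI card_gt_0_iff empty_iff)
  have "m * (card H - 1) = order G - m" using lag by (simp add: right_diff_distrib')
  moreover have "m * 1 \<le> m * card H" using hpos by (rule mult_le_mono2)
  hence "m \<le> order G" using lag by simp
  ultimately have "m \<le> 1" using ineq by linarith
  moreover have "m \<noteq> 0" using lag fin order_gt_0_iff_finite by (metis mult_0 less_irrefl)
  ultimately have "m = 1" by simp
  hence "card H = card (carrier G)" using lag unfolding order_def by simp
  thus ?thesis using Hc fin card_subset_eq by blast
qed

lemma (in group) commute_inv:
  assumes "x \<in> carrier G" "y \<in> carrier G" "x \<otimes> y = y \<otimes> x"
  shows "x \<otimes> inv y = inv y \<otimes> x"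
proof -
  have "x \<otimes> inv y = inv y \<otimes> (y \<otimes> x) \<otimes> inv y" using assms(1,2) by (simp add: m_assoc[symmetric])
  also have "\<dots> = inv y \<otimes> (x \<otimes> y) \<otimes> inv y" using assms by simp
  also have "\<dots> = inv y \<otimes> x" using assms(1,2) by (simp add: m_assoc)
  finally show ?thesis .
qed

lemma (in group) centralizer_subgroup:
  assumes "S \<subseteq> carrier G"
  shows "subgroup {h \<in> carrier G. \<forall>q\<in>S. q \<otimes> h = h \<otimes> q} G"
proof (rule subgroupI)
  have "\<one> \<in> {h \<in> carrier G. \<forall>q\<in>S. q \<otimes> h = h \<otimes> q}" using assms by auto
  thus "{h \<in> carrier G. \<forall>q\<in>S. q \<otimes> h = h \<otimes> q} \<noteq> {}" by blast
next
  fix h assume h: "h \<in> {h \<in> carrier G. \<forall>q\<in>S. q \<otimes> h = h \<otimes> q}"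
  thus "inv h \<in> {h \<in> carrier G. \<forall>q\<in>S. q \<otimes> h = h \<otimes> q}"
    using assms commute_inv by auto
next
  fix h1 h2 assume h1: "h1 \<in> {h \<in> carrier G. \<forall>q\<in>S. q \<otimes> h = h \<otimes> q}"
    and h2: "h2 \<in> {h \<in> carrier G. \<forall>q\<in>S. q \<otimes> h = h \<otimes> q}"
  show "h1 \<otimes> h2 \<in> {h \<in> carrier G. \<forall>q\<in>S. q \<otimes> h = h \<otimes> q}"
  proof (safe)
    show "h1 \<otimes> h2 \<in> carrier G" using h1 h2 by auto
  next
    fix q assume q: "q \<in> S"
    hence qc: "q \<in> carrier G" using assms by auto
    have "q \<otimes> (h1 \<otimes> h2) = (q \<otimes> h1) \<otimes> h2" using h1 h2 qc by (simp add: m_assoc)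
    also have "\<dots> = h1 \<otimes> (q \<otimes> h2)" using h1 h2 qc q by (simp add: m_assoc)
    also have "\<dots> = (h1 \<otimes> h2) \<otimes> q" using h1 h2 qc q by (simp add: m_assoc)
    finally show "q \<otimes> (h1 \<otimes> h2) = h1 \<otimes> h2 \<otimes> q" .
  qed
qed auto

lemma (in group) class_div:
  assumes simple: "simple_group G" and ncomm: "\<not> comm_group G" and fin: "finite (carrier G)"
    and p: "Factorial_Ring.prime p" and pd: "p dvd card (carrier G)"
  shows "\<exists>s\<in>carrier G. p dvd card {t \<otimes> s \<otimes> inv t | t. t \<in> carrier G}"
proof (rule ccontr)
  assume nd: "\<not> ?thesis"
  have "order G = p ^ 1 * (order G div p)" using pd unfolding order_def by simp
  from sylow_thm[OF p is_group this fin] obtain P where P: "subgroup P G" "card P = p"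
    by auto
  have Pc: "P \<subseteq> carrier G" using P subgroup.subset by blast
  define Hc where "Hc = {h \<in> carrier G. \<forall>q\<in>P. q \<otimes> h = h \<otimes> q}"
  have Hsub: "subgroup Hc G" unfolding Hc_def using centralizer_subgroup[OF Pc] .
  define \<phi> where "\<phi> = (\<lambda>g. \<lambda>h \<in> carrier G. g \<otimes> h \<otimes> inv g)"
  have act: "group_action (G\<lparr>carrier := P\<rparr>) (carrier G) \<phi>"
    unfolding \<phi>_def using group_action.induced_action[OF action_by_conjugation P(1)] .
  have ordP: "order (G\<lparr>carrier := P\<rparr>) = p" using P by (simp add: order_def)
  have cov: "\<forall>y\<in>carrier G. \<exists>g\<in>carrier G. inv g \<otimes> y \<otimes> g \<in> Hc"
  proof
    fix y assume y: "y \<in> carrier G"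
    define C where "C = {t \<otimes> y \<otimes> inv t | t. t \<in> carrier G}"
    have ndC: "\<not> p dvd card C" using nd y unfolding C_def by blast
    have Cc: "C \<subseteq> carrier G" unfolding C_def using y by auto
    have finC: "finite C" using Cc fin finite_subset by blast
    show "\<exists>g\<in>carrier G. inv g \<otimes> y \<otimes> g \<in> Hc"
    proof (cases "\<exists>c\<in>C. \<forall>q\<in>P. q \<otimes> c \<otimes> inv q = c")
      case True
      then obtain c where c: "c \<in> C" "\<forall>q\<in>P. q \<otimes> c \<otimes> inv q = c" by blast
      then obtain t where t: "t \<in> carrier G" "c = t \<otimes> y \<otimes> inv t" unfolding C_def by blast
      have cc: "c \<in> carrier G" using c Cc by blast
      have "c \<in> Hc" unfolding Hc_def
      proof (safe)
        show "c \<in> carrier G" by (rule cc)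
      next
        fix q assume q: "q \<in> P"
        hence qc: "q \<in> carrier G" using Pc by blast
        have "q \<otimes> c \<otimes> inv q \<otimes> q = c \<otimes> q" using c q by simp
        thus "q \<otimes> c = c \<otimes> q" using qc cc by (simp add: m_assoc)
      qed
      moreover have "inv (inv t) \<otimes> y \<otimes> inv t = c" using t by simp
      ultimately show ?thesis using t(1) inv_closed by blast
    next
      case False
      hence nf: "\<forall>c\<in>C. \<exists>q\<in>P. q \<otimes> c \<otimes> inv q \<noteq> c" by blast
      define Ob where "Ob c = orbit (G\<lparr>carrier := P\<rparr>) \<phi> c" for c
      have Oeq: "Ob c = {\<phi> q c | q. q \<in> P}" for c
        unfolding Ob_def orbit_def by simp
      have OC: "Ob c \<subseteq> C" if c: "c \<in> C" for c
      proof
        fix z assume "z \<in> Ob c"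
        then obtain q where q: "q \<in> P" "z = \<phi> q c" using Oeq by blast
        obtain t where t: "t \<in> carrier G" "c = t \<otimes> y \<otimes> inv t" using c unfolding C_def by blast
        have qc: "q \<in> carrier G" using q Pc by blast
        have "z = (q \<otimes> t) \<otimes> y \<otimes> inv (q \<otimes> t)"
          using q t qc y unfolding \<phi>_def by (simp add: m_assoc inv_mult_group)
        thus "z \<in> C" unfolding C_def using qc t by blast
      qed
      have cO: "c \<in> Ob c" if "c \<in> C" for c
      proof -
        have "\<phi> \<one> c = c" using that Cc unfolding \<phi>_def by auto
        thus ?thesis using Oeq subgroup.one_closed[OF P(1)] by force
      qed
      have cardO: "card (Ob c) = p" if c: "c \<in> C" for c
      proof -
        have E: "card (Ob c) * card (stabilizer (G\<lparr>carrier := P\<rparr>) \<phi> c) = p"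
          using group_action.orbit_stabilizer_theorem[OF act] c Cc ordP unfolding Ob_def by auto
        have "card (Ob c) dvd p" by (subst E[symmetric]) simp
        hence "card (Ob c) = 1 \<or> card (Ob c) = p" using p prime_nat_iff by blast
        moreover have "card (Ob c) \<noteq> 1"
        proof
          assume "card (Ob c) = 1"
          then obtain a where "Ob c = {a}" using card_1_singletonE by blast
          hence Os: "Ob c = {c}" using cO[OF c] by auto
          obtain q where q: "q \<in> P" "q \<otimes> c \<otimes> inv q \<noteq> c" using nf c by blast
          have "\<phi> q c \<in> Ob c" using Oeq q by blast
          hence "\<phi> q c = c" using Os by blast
          thus False using q c Cc unfolding \<phi>_def by auto
        qed
        ultimately show ?thesis by blast
      qed
      have "p * card (Ob ` C) = card (\<Union> (Ob ` C))"
      proof (rule card_partition)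
        show "finite (Ob ` C)" using finC by blast
        show "finite (\<Union> (Ob ` C))" using OC by (intro finite_subset[OF _ finC]) blast
        show "\<And>c. c \<in> Ob ` C \<Longrightarrow> card c = p" using cardO by blast
        show "\<And>c1 c2. c1 \<in> Ob ` C \<Longrightarrow> c2 \<in> Ob ` C \<Longrightarrow> c1 \<noteq> c2 \<Longrightarrow> c1 \<inter> c2 = {}"
        proof -
          fix c1 c2 assume "c1 \<in> Ob ` C" "c2 \<in> Ob ` C" "c1 \<noteq> c2"
          moreover have "Ob ` C \<subseteq> orbits (G\<lparr>carrier := P\<rparr>) (carrier G) \<phi>"
            unfolding orbits_def Ob_def using Cc by blast
          ultimately show "c1 \<inter> c2 = {}"
            using group_action.disjoint_union[OF act] by blast
        qed
      qed
      moreover have "\<Union> (Ob ` C) = C" using OC cO by blast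
      ultimately have "p * card (Ob ` C) = card C" by simp
      hence "p dvd card C" by (metis dvd_def)
      thus ?thesis using ndC by blast
    qed
  qed
  have HG: "Hc = carrier G" using conj_union[OF fin Hsub cov] .
  define Z where "Z = {h \<in> carrier G. \<forall>q\<in>carrier G. q \<otimes> h = h \<otimes> q}"
  have Zsub: "subgroup Z G" unfolding Z_def using centralizer_subgroup by blast
  have Znorm: "Z \<lhd> G"
  proof (rule normal_invI[OF Zsub])
    fix x h assume x: "x \<in> carrier G" and h: "h \<in> Z"
    have hc: "h \<in> carrier G" using h Z_def by blast
    have "x \<otimes> h \<otimes> inv x = h" using x h hc unfolding Z_def by (simp add: m_assoc)
    thus "x \<otimes> h \<otimes> inv x \<in> Z" using h by simp
  qed
  have PZ: "P \<subseteq> Z"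
  proof
    fix q assume q: "q \<in> P"
    have "\<forall>g\<in>carrier G. q \<otimes> g = g \<otimes> q" using HG q unfolding Hc_def by blast
    thus "q \<in> Z" using q Pc unfolding Z_def by auto
  qed
  have "Z \<noteq> {\<one>}"
  proof
    assume "Z = {\<one>}"
    hence "card P \<le> card {\<one>}" using PZ by (intro card_mono) auto
    hence "card P \<le> 1" by simp
    thus False using P prime_gt_1_nat[OF p] by simp
  qed
  hence "Z = carrier G" using simple_group.no_real_normal_subgroup[OF simple Znorm] by blast
  hence "comm_group G" using group_comm_groupI unfolding Z_def by blast
  thus False using ncomm by blast
qed

lemma card_eq_via:
  assumes "\<And>a b. a \<in> A \<Longrightarrow> b \<in> A \<Longrightarrow> (f a = f b \<longleftrightarrow> g a = g b)"
  shows "card (f ` A) = card (g ` A)"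
proof -
  define h where "h y = g (SOME a. a \<in> A \<and> f a = y)" for y
  have hf: "h (f a) = g a" if "a \<in> A" for a
  proof -
    have ex: "\<exists>a'. a' \<in> A \<and> f a' = f a" using that by blast
    have "(SOME a'. a' \<in> A \<and> f a' = f a) \<in> A \<and> f (SOME a'. a' \<in> A \<and> f a' = f a) = f a"
      using someI_ex[OF ex] .
    thus ?thesis unfolding h_def using assms that by blast
  qed
  have "g ` A = h ` (f ` A)" using hf by (auto simp: image_iff)
  moreover have "inj_on h (f ` A)"
  proof (rule inj_onI)
    fix x y assume "x \<in> f ` A" "y \<in> f ` A" "h x = h y"
    then obtain a b where "a \<in> A" "b \<in> A" "x = f a" "y = f b" "g a = g b" using hf by auto
    thus "x = y" using assms by blast
  qed
  ultimately show ?thesis by (simp add: card_image)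
qed

lemma (in group) lcancel_iff:
  "x \<in> carrier G \<Longrightarrow> y \<in> carrier G \<Longrightarrow> z \<in> carrier G \<Longrightarrow> (x \<otimes> y = x \<otimes> z) \<longleftrightarrow> (y = z)"
  by (metis Units_eq Units_l_cancel)

lemma (in group) rcancel_iff:
  "x \<in> carrier G \<Longrightarrow> y \<in> carrier G \<Longrightarrow> z \<in> carrier G \<Longrightarrow> (y \<otimes> x = z \<otimes> x) \<longleftrightarrow> (y = z)"
  by (metis inv_closed m_assoc m_closed r_inv r_one)

lemma (in group) conj_eq_iff:
  assumes "t \<in> carrier G" "t' \<in> carrier G" "s \<in> carrier G"
  shows "(t \<otimes> s \<otimes> inv t = t' \<otimes> s \<otimes> inv t') \<longleftrightarrow> (inv s \<otimes> (inv t' \<otimes> t) \<otimes> s = inv t' \<otimes> t)"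
proof -
  have "(t \<otimes> s \<otimes> inv t = t' \<otimes> s \<otimes> inv t') \<longleftrightarrow>
        (inv t' \<otimes> (t \<otimes> s \<otimes> inv t) = inv t' \<otimes> (t' \<otimes> s \<otimes> inv t'))"
    using assms by (subst lcancel_iff) auto
  also have "\<dots> \<longleftrightarrow> (inv t' \<otimes> (t \<otimes> s \<otimes> inv t) \<otimes> t = inv t' \<otimes> (t' \<otimes> s \<otimes> inv t') \<otimes> t)"
    using assms by (subst rcancel_iff) auto
  also have "inv t' \<otimes> (t' \<otimes> s \<otimes> inv t') \<otimes> t = s \<otimes> (inv t' \<otimes> t)"
    using assms by (simp add: m_assoc)
  also have "inv t' \<otimes> (t \<otimes> s \<otimes> inv t) \<otimes> t = (inv t' \<otimes> t) \<otimes> s"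
    using assms by (simp add: m_assoc)
  also have "((inv t' \<otimes> t) \<otimes> s = s \<otimes> (inv t' \<otimes> t)) \<longleftrightarrow>
             (inv s \<otimes> ((inv t' \<otimes> t) \<otimes> s) = inv s \<otimes> (s \<otimes> (inv t' \<otimes> t)))"
    using assms by (subst lcancel_iff) auto
  also have "inv s \<otimes> (s \<otimes> (inv t' \<otimes> t)) = inv t' \<otimes> t" using assms by simp
  also have "inv s \<otimes> ((inv t' \<otimes> t) \<otimes> s) = inv s \<otimes> (inv t' \<otimes> t) \<otimes> s"
    using assms by (simp add: m_assoc)
  finally show ?thesis .
qed

theorem lemma3p3:
  fixes \<Omega> :: "'a set" and G :: "('a \<Rightarrow> 'a) set" and T :: "('b, 'c) monoid_scheme"
    and k :: nat and p :: nat
  assumes "finite \<Omega>"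
    and "primitive \<Omega> G"
    and "diagonal_type \<Omega> G T k"
    and "Factorial_Ring.prime p" and "p dvd card \<Omega>"
  shows "\<exists>\<alpha>\<in>\<Omega>. \<exists>\<beta>\<in>\<Omega>. p dvd subdegree G \<alpha> \<beta>"
proof -
  note fin = assms(1) and prim = assms(2) and dt = assms(3) and pp = assms(4) and pd = assms(5)
  define B where "B = BijGroup \<Omega>"
  define H where "H = PG \<Omega> G"
  have grpB: "group B" unfolding B_def by (rule group_BijGroup)
  have subG: "subgroup G B" using prim unfolding primitive_def perm_group_def B_def by blast
  have Hdef: "H = B\<lparr>carrier := G\<rparr>" unfolding H_def PG_def B_def by simp
  have grpH: "group H" unfolding Hdef using group.subgroup_imp_group[OF grpB subG] .
  have GBij: "G \<subseteq> Bij \<Omega>" using subgroup.subset[OF subG] unfolding B_def BijGroup_def by simp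
  have carrH: "carrier H = G" unfolding Hdef by simp
  have multH: "g \<otimes>\<^bsub>H\<^esub> h = compose \<Omega> g h" if "g \<in> G" "h \<in> G" for g h
    using that GBij unfolding Hdef B_def BijGroup_def by auto
  have oneH: "\<one>\<^bsub>H\<^esub> = (\<lambda>x\<in>\<Omega>. x)" unfolding Hdef B_def BijGroup_def by simp
  have app_mult: "(g \<otimes>\<^bsub>H\<^esub> h) z = g (h z)" if "g \<in> G" "h \<in> G" "z \<in> \<Omega>" for g h z
    using multH[OF that(1,2)] that(3) by (simp add: compose_def)
  have app_one: "\<one>\<^bsub>H\<^esub> z = z" if "z \<in> \<Omega>" for z using that oneH by simp
  have app_in: "g z \<in> \<Omega>" if "g \<in> G" "z \<in> \<Omega>" for g z
    using that GBij unfolding Bij_def bij_betw_def by auto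
  have app_inj: "inj_on g \<Omega>" if "g \<in> G" for g
    using that GBij unfolding Bij_def bij_betw_def by auto
  have app_inv1: "(inv\<^bsub>H\<^esub> g) (g z) = z" if "g \<in> G" "z \<in> \<Omega>" for g z
  proof -
    have "inv\<^bsub>H\<^esub> g \<in> G" using group.inv_closed[OF grpH] that carrH by auto
    hence "(inv\<^bsub>H\<^esub> g) (g z) = (inv\<^bsub>H\<^esub> g \<otimes>\<^bsub>H\<^esub> g) z" using app_mult that by simp
    also have "\<dots> = z" using group.l_inv[OF grpH] that carrH app_one by simp
    finally show ?thesis .
  qed
  have app_inv2: "g ((inv\<^bsub>H\<^esub> g) z) = z" if "g \<in> G" "z \<in> \<Omega>" for g z
  proof -
    have "inv\<^bsub>H\<^esub> g \<in> G" using group.inv_closed[OF grpH] that carrH by auto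
    hence "g ((inv\<^bsub>H\<^esub> g) z) = (g \<otimes>\<^bsub>H\<^esub> inv\<^bsub>H\<^esub> g) z" using app_mult that by simp
    also have "\<dots> = z" using group.r_inv[OF grpH] that carrH app_one by simp
    finally show ?thesis .
  qed
  have finG: "finite G"
  proof -
    have "Bij \<Omega> \<subseteq> (\<Pi>\<^sub>E x\<in>\<Omega>. \<Omega>)"
    proof
      fix g assume "g \<in> Bij \<Omega>"
      hence "g \<in> Pi \<Omega> (\<lambda>_. \<Omega>)" "g \<in> extensional \<Omega>"
        using Bij_imp_funcset Bij_imp_extensional by auto
      thus "g \<in> (\<Pi>\<^sub>E x\<in>\<Omega>. \<Omega>)" unfolding PiE_def by blast
    qed
    moreover have "finite (\<Pi>\<^sub>E x\<in>\<Omega>. \<Omega>)" using fin by (intro finite_PiE)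
    ultimately show ?thesis using finite_subset[OF subset_trans[OF GBij]] by blast
  qed
  define N where "N = socle H"
  have Nnormal: "N \<lhd> H"
    unfolding N_def socle_def
  proof (rule group.normal_generateI[OF grpH])
    show "\<Union> {N. minimal_normal H N} \<subseteq> carrier H"
    proof
      fix x assume "x \<in> \<Union> {N. minimal_normal H N}"
      then obtain M where M: "minimal_normal H M" "x \<in> M" by blast
      hence "M \<lhd> H" unfolding minimal_normal_def by blast
      hence "subgroup M H" by (rule normal_imp_subgroup)
      thus "x \<in> carrier H" using subgroup.mem_carrier[OF _ M(2)] by blast
    qed
  next
    fix h g assume "h \<in> \<Union> {N. minimal_normal H N}" "g \<in> carrier H"
    then obtain M where M: "minimal_normal H M" "h \<in> M" by blast
    hence "M \<lhd> H" unfolding minimal_normal_def by blast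
    hence "g \<otimes>\<^bsub>H\<^esub> h \<otimes>\<^bsub>H\<^esub> inv\<^bsub>H\<^esub> g \<in> M" using normal.inv_op_closed2[OF _ \<open>g \<in> carrier H\<close> M(2)] by blast
    thus "g \<otimes>\<^bsub>H\<^esub> h \<otimes>\<^bsub>H\<^esub> inv\<^bsub>H\<^esub> g \<in> \<Union> {N. minimal_normal H N}" using M by blast
  qed
  have Nsub: "subgroup N H" using normal_imp_subgroup[OF Nnormal] .
  have NG: "N \<subseteq> G" using subgroup.subset[OF Nsub] carrH by simp
  define NG where "NG = H\<lparr>carrier := N\<rparr>"
  have grpNG: "group NG" unfolding NG_def using group.subgroup_imp_group[OF grpH Nsub] .
  have finN: "finite N" using finite_subset[OF NG finG] .
  have simT: "simple_group T" and ncT: "\<not> comm_group T" and k2: "2 \<le> k"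
    using dt unfolding diagonal_type_def by auto
  have grpT: "group T" using simT simple_group_def by blast
  define P where "P = product_group {..<k} (\<lambda>_. T)"
  have grpP: "group P" unfolding P_def using grpT by simp
  have ex: "\<exists>f. f \<in> iso NG P \<and>
       (\<exists>\<alpha>\<in>\<Omega>. \<exists>\<phi>. (\<forall>i<k. \<phi> i \<in> iso T T) \<and>
          f ` {g \<in> N. g \<alpha> = \<alpha>} = {(\<lambda>i\<in>{..<k}. \<phi> i t) | t. t \<in> carrier T})"
    using dt unfolding diagonal_type_def NG_def H_def N_def P_def by (elim conjE)
  then obtain f where f: "f \<in> iso NG P" and ex2: "\<exists>\<alpha>\<in>\<Omega>. \<exists>\<phi>. (\<forall>i<k. \<phi> i \<in> iso T T) \<and>
          f ` {g \<in> N. g \<alpha> = \<alpha>} = {(\<lambda>i\<in>{..<k}. \<phi> i t) | t. t \<in> carrier T}"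
    by (elim exE conjE)
  then obtain \<alpha> \<phi> where \<alpha>: "\<alpha> \<in> \<Omega>"
    and \<phi>: "\<forall>i<k. \<phi> i \<in> iso T T"
    and fD: "f ` {g \<in> N. g \<alpha> = \<alpha>} = {(\<lambda>i\<in>{..<k}. \<phi> i t) | t. t \<in> carrier T}"
    by (elim bexE exE conjE)
  have carrNG: "carrier NG = N" unfolding NG_def by simp
  have multNG: "(\<otimes>\<^bsub>NG\<^esub>) = (\<otimes>\<^bsub>H\<^esub>)" unfolding NG_def by simp
  have invNG: "inv\<^bsub>NG\<^esub> a = inv\<^bsub>H\<^esub> a" if "a \<in> N" for a
    unfolding NG_def using group.m_inv_consistent[OF grpH Nsub that] .
  have fH: "f \<in> hom NG P" using f unfolding iso_def by simp
  have fbij: "bij_betw f N (carrier P)" using f carrNG unfolding iso_def by simp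
  have fhom: "group_hom NG P f"
    by (intro group_hom.intro grpNG grpP group_hom_axioms.intro fH)
  have fmult: "f (a \<otimes>\<^bsub>H\<^esub> b) = f a \<otimes>\<^bsub>P\<^esub> f b" if "a \<in> N" "b \<in> N" for a b
  proof -
    have "f (a \<otimes>\<^bsub>NG\<^esub> b) = f a \<otimes>\<^bsub>P\<^esub> f b"
      by (rule group_hom.hom_mult[OF fhom]) (simp_all add: carrNG that)
    thus ?thesis by (simp add: multNG)
  qed
  have finv: "f (inv\<^bsub>H\<^esub> a) = inv\<^bsub>P\<^esub> (f a)" if "a \<in> N" for a
  proof -
    have "f (inv\<^bsub>NG\<^esub> a) = inv\<^bsub>P\<^esub> (f a)"
      by (rule group_hom.hom_inv[OF fhom]) (simp add: carrNG that)
    thus ?thesis by (simp add: invNG[OF that])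
  qed
  have finj: "inj_on f N" using bij_betw_imp_inj_on[OF fbij] .
  have fsurj: "f ` N = carrier P" using bij_betw_imp_surj_on[OF fbij] .
  have carrP: "carrier P = (\<Pi>\<^sub>E i\<in>{..<k}. carrier T)" unfolding P_def by simp
  have multP: "a \<otimes>\<^bsub>P\<^esub> b = (\<lambda>i\<in>{..<k}. a i \<otimes>\<^bsub>T\<^esub> b i)" for a b unfolding P_def by simp
  have invP: "inv\<^bsub>P\<^esub> a = (\<lambda>i\<in>{..<k}. inv\<^bsub>T\<^esub> a i)" if "a \<in> carrier P" for a
    unfolding P_def by (rule inv_product_group) (use that grpT carrP in auto)
  have fin_in: "f a \<in> carrier P" if "a \<in> N" for a using fsurj that by (metis imageI)
  have \<phi>hom: "group_hom T T (\<phi> i)" if "i < k" for i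
    using \<phi> that grpT unfolding iso_def by (intro group_hom.intro group_hom_axioms.intro) auto
  have \<phi>inj: "inj_on (\<phi> i) (carrier T)" if "i < k" for i
    using \<phi> that unfolding iso_def bij_betw_def by auto
  have \<phi>in: "\<phi> i t \<in> carrier T" if "i < k" "t \<in> carrier T" for i t
    using \<phi> that unfolding iso_def hom_def by auto
  have \<phi>mult: "\<phi> i (a \<otimes>\<^bsub>T\<^esub> b) = \<phi> i a \<otimes>\<^bsub>T\<^esub> \<phi> i b" if "i < k" "a \<in> carrier T" "b \<in> carrier T" for i a b
    using group_hom.hom_mult[OF \<phi>hom[OF that(1)] that(2,3)] .
  have \<phi>inv: "\<phi> i (inv\<^bsub>T\<^esub> a) = inv\<^bsub>T\<^esub> (\<phi> i a)" if "i < k" "a \<in> carrier T" for i a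
    using group_hom.hom_inv[OF \<phi>hom[OF that(1)] that(2)] .
  have \<phi>one: "\<phi> i \<one>\<^bsub>T\<^esub> = \<one>\<^bsub>T\<^esub>" if "i < k" for i
    using group_hom.hom_one[OF \<phi>hom[OF that]] .
  have k0: "0 < k" and k1: "1 < k" using k2 by auto
  define diag where "diag t = (\<lambda>i\<in>{..<k}. \<phi> i t)" for t
  define D where "D = {diag t | t. t \<in> carrier T}"
  define Na where "Na = {g \<in> N. g \<alpha> = \<alpha>}"
  have fNa: "f ` Na = D" using fD unfolding Na_def D_def diag_def .
  have KM: "n \<alpha> = \<alpha> \<longleftrightarrow> f n \<in> D" if n: "n \<in> N" for n
  proof
    assume "n \<alpha> = \<alpha>" thus "f n \<in> D" using n fNa Na_def by blast
  next
    assume "f n \<in> D"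
    then obtain m where m: "m \<in> Na" "f m = f n" using fNa by (metis imageE)
    have "m \<in> N" using m Na_def by blast
    hence "m = n" using finj m(2) n unfolding inj_on_def by blast
    thus "n \<alpha> = \<alpha>" using m Na_def by blast
  qed
  have diag_inj: "inj_on diag (carrier T)"
  proof (rule inj_onI)
    fix t t' assume t: "t \<in> carrier T" "t' \<in> carrier T" "diag t = diag t'"
    hence "diag t 0 = diag t' 0" by simp
    hence "\<phi> 0 t = \<phi> 0 t'" using k0 unfolding diag_def by simp
    thus "t = t'" using inj_onD[OF \<phi>inj[OF k0]] t by blast
  qed
  have Dimg: "D = diag ` carrier T" unfolding D_def by blast
  have NaN: "Na \<subseteq> N" unfolding Na_def by blast
  have finNa: "finite Na" using finite_subset[OF NaN finN] .
  have finT: "finite (carrier T)"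
  proof -
    have "finite (diag ` carrier T)" using fNa Dimg finNa by (metis finite_imageI)
    thus ?thesis using finite_imageD diag_inj by blast
  qed
  have cardNa: "card Na = card (carrier T)"
  proof -
    have "card Na = card (f ` Na)" using card_image[OF inj_on_subset[OF finj NaN]] by simp
    also have "\<dots> = card (carrier T)" using fNa Dimg card_image[OF diag_inj] by simp
    finally show ?thesis .
  qed
  have cardN: "card N = card (carrier T) ^ k"
  proof -
    have "card N = card (carrier P)" using bij_betw_same_card[OF fbij] .
    also have "\<dots> = card (carrier T) ^ k" unfolding carrP by (simp add: card_PiE)
    finally show ?thesis .
  qed
  have NGe: "n \<in> G" if "n \<in> N" for n using that NG by blast
  have invG: "inv\<^bsub>H\<^esub> g \<in> G" if "g \<in> G" for g
    using group.inv_closed[OF grpH, of g] that carrH by simp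
  have mG: "g \<otimes>\<^bsub>H\<^esub> h \<in> G" if "g \<in> G" "h \<in> G" for g h
    using monoid.m_closed[OF group.is_monoid[OF grpH], of g h] that carrH by simp
  have invN: "inv\<^bsub>H\<^esub> n \<in> N" if "n \<in> N" for n
    using subgroup.m_inv_closed[OF Nsub that] .
  have mN: "a \<otimes>\<^bsub>H\<^esub> b \<in> N" if "a \<in> N" "b \<in> N" for a b
    using subgroup.m_closed[OF Nsub that] .
  have oneN: "\<one>\<^bsub>H\<^esub> \<in> N" using subgroup.one_closed[OF Nsub] .
  have norm2: "g \<otimes>\<^bsub>H\<^esub> n \<otimes>\<^bsub>H\<^esub> inv\<^bsub>H\<^esub> g \<in> N" if "g \<in> G" "n \<in> N" for g n
    using normal.inv_op_closed2[OF Nnormal, of g n] that carrH by simp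
  have norm1: "inv\<^bsub>H\<^esub> g \<otimes>\<^bsub>H\<^esub> n \<otimes>\<^bsub>H\<^esub> g \<in> N" if "g \<in> G" "n \<in> N" for g n
    using normal.inv_op_closed1[OF Nnormal, of g n] that carrH by simp
  define Orb0 where "Orb0 = (\<lambda>n. n \<alpha>) ` N"
  have Orb0\<Omega>: "Orb0 \<subseteq> \<Omega>" unfolding Orb0_def using app_in NGe \<alpha> by blast
  have finOrb0: "finite Orb0" using finite_subset[OF Orb0\<Omega> fin] .
  have \<alpha>Orb0: "\<alpha> \<in> Orb0"
  proof -
    have "\<one>\<^bsub>H\<^esub> \<alpha> = \<alpha>" using app_one \<alpha> .
    thus ?thesis unfolding Orb0_def using oneN by (metis imageI)
  qed
  have block: "is_block \<Omega> G Orb0"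
    unfolding is_block_def
  proof (intro conjI ballI)
    show "Orb0 \<subseteq> \<Omega>" by (rule Orb0\<Omega>)
  next
    fix g assume g: "g \<in> G"
    show "g ` Orb0 = Orb0 \<or> g ` Orb0 \<inter> Orb0 = {}"
    proof (cases "g ` Orb0 \<inter> Orb0 = {}")
      case True thus ?thesis by blast
    next
      case False
      then obtain n1 n2 where n1: "n1 \<in> N" and n2: "n2 \<in> N" and eq: "g (n1 \<alpha>) = n2 \<alpha>"
        unfolding Orb0_def by blast
      have sub: "g ` Orb0 \<subseteq> Orb0"
      proof
        fix z assume "z \<in> g ` Orb0"
        then obtain n where n: "n \<in> N" and z: "z = g (n \<alpha>)" unfolding Orb0_def by blast
        define c where "c = g \<otimes>\<^bsub>H\<^esub> (n \<otimes>\<^bsub>H\<^esub> inv\<^bsub>H\<^esub> n1) \<otimes>\<^bsub>H\<^esub> inv\<^bsub>H\<^esub> g"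
        have cN: "c \<in> N" unfolding c_def using norm2[OF g mN[OF n invN[OF n1]]] .
        have cG: "c \<in> G" using NGe cN .
        have m: "c \<otimes>\<^bsub>H\<^esub> n2 \<in> N" using mN[OF cN n2] .
        have n1\<alpha>: "n1 \<alpha> \<in> \<Omega>" using app_in[OF NGe[OF n1] \<alpha>] .
        have "(c \<otimes>\<^bsub>H\<^esub> n2) \<alpha> = c (n2 \<alpha>)" using app_mult[OF cG NGe[OF n2] \<alpha>] .
        also have "\<dots> = c (g (n1 \<alpha>))" using eq by simp
        also have "\<dots> = (g \<otimes>\<^bsub>H\<^esub> (n \<otimes>\<^bsub>H\<^esub> inv\<^bsub>H\<^esub> n1)) ((inv\<^bsub>H\<^esub> g) (g (n1 \<alpha>)))"
          unfolding c_def
          using app_mult[OF mG[OF g NGe[OF mN[OF n invN[OF n1]]]] invG[OF g] app_in[OF g n1\<alpha>]] .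
        also have "\<dots> = (g \<otimes>\<^bsub>H\<^esub> (n \<otimes>\<^bsub>H\<^esub> inv\<^bsub>H\<^esub> n1)) (n1 \<alpha>)"
          using app_inv1[OF g n1\<alpha>] by simp
        also have "\<dots> = g ((n \<otimes>\<^bsub>H\<^esub> inv\<^bsub>H\<^esub> n1) (n1 \<alpha>))"
          using app_mult[OF g NGe[OF mN[OF n invN[OF n1]]] n1\<alpha>] .
        also have "\<dots> = g (n ((inv\<^bsub>H\<^esub> n1) (n1 \<alpha>)))"
          using app_mult[OF NGe[OF n] NGe[OF invN[OF n1]] n1\<alpha>] by simp
        also have "\<dots> = g (n \<alpha>)" using app_inv1[OF NGe[OF n1] \<alpha>] by simp
        finally have "z = (c \<otimes>\<^bsub>H\<^esub> n2) \<alpha>" using z by simp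
        thus "z \<in> Orb0" unfolding Orb0_def using m by blast
      qed
      have "card (g ` Orb0) = card Orb0"
        using card_image[OF inj_on_subset[OF app_inj[OF g] Orb0\<Omega>]] .
      hence "g ` Orb0 = Orb0" using card_subset_eq[OF finOrb0 sub] by blast
      thus ?thesis by blast
    qed
  qed
  have Orb0_all: "Orb0 = \<Omega>"
  proof (rule ccontr)
    assume ne: "Orb0 \<noteq> \<Omega>"
    have "card Orb0 = 1 \<or> Orb0 = \<Omega>"
      using prim block \<alpha>Orb0 unfolding primitive_def by blast
    hence "card Orb0 = 1" using ne by blast
    hence "Orb0 = {\<alpha>}" using \<alpha>Orb0 by (metis card_1_singletonE singletonD)
    hence fixall: "\<forall>n\<in>N. n \<alpha> = \<alpha>" unfolding Orb0_def by blast
    have "carrier T \<noteq> {\<one>\<^bsub>T\<^esub>}" using simple_group.simple_not_triv[OF simT] .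
    moreover have "\<one>\<^bsub>T\<^esub> \<in> carrier T" using monoid.one_closed[OF group.is_monoid[OF grpT]] .
    ultimately obtain t where t: "t \<in> carrier T" "t \<noteq> \<one>\<^bsub>T\<^esub>" by blast
    define e where "e = (\<lambda>i\<in>{..<k}. if i = 1 then t else \<one>\<^bsub>T\<^esub>)"
    have "e \<in> carrier P" unfolding carrP e_def using t monoid.one_closed[OF group.is_monoid[OF grpT]] by auto
    then obtain n where n: "n \<in> N" "f n = e" using fsurj by (metis imageE)
    have "f n \<in> D" using KM[OF n(1)] fixall n(1) by blast
    then obtain w where w: "w \<in> carrier T" "e = diag w" using n(2) unfolding D_def by blast
    have "e 0 = \<one>\<^bsub>T\<^esub>" unfolding e_def using k0 by simp
    hence "\<phi> 0 w = \<phi> 0 \<one>\<^bsub>T\<^esub>" using w k0 \<phi>one[OF k0] unfolding diag_def by simp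
    hence w1: "w = \<one>\<^bsub>T\<^esub>" using inj_onD[OF \<phi>inj[OF k0]] w(1) monoid.one_closed[OF group.is_monoid[OF grpT]] by blast
    have "e 1 = t" unfolding e_def using k1 by simp
    hence "t = \<phi> 1 w" using w k1 unfolding diag_def by simp
    hence "t = \<one>\<^bsub>T\<^esub>" using w1 \<phi>one[OF k1] by simp
    thus False using t by blast
  qed
  have homid: "(\<lambda>g. g) \<in> hom NG B"
    unfolding hom_def
  proof (intro CollectI conjI ballI)
    show "(\<lambda>g. g) \<in> carrier NG \<rightarrow> carrier B"
      using carrNG NG GBij unfolding B_def BijGroup_def by auto
  next
    fix x y assume "x \<in> carrier NG" "y \<in> carrier NG"
    show "x \<otimes>\<^bsub>NG\<^esub> y = x \<otimes>\<^bsub>B\<^esub> y" unfolding multNG Hdef by simp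
  qed
  have actN: "group_action NG \<Omega> (\<lambda>g. g)"
    unfolding group_action_def group_hom_def group_hom_axioms_def
    using grpNG grpB homid unfolding B_def by blast
  have orbN: "orbit NG (\<lambda>g. g) \<alpha> = Orb0" unfolding orbit_def Orb0_def carrNG by blast
  have stabN: "stabilizer NG (\<lambda>g. g) \<alpha> = Na" unfolding stabilizer_def Na_def carrNG by blast
  have "card Orb0 * card Na = order NG"
    using group_action.orbit_stabilizer_theorem[OF actN \<alpha>] orbN stabN by simp
  hence cardeq: "card \<Omega> * card (carrier T) = card (carrier T) ^ k"
    using Orb0_all cardNa cardN carrNG unfolding order_def by simp
  have cTpos: "card (carrier T) > 0"
    using finT monoid.one_closed[OF group.is_monoid[OF grpT]] card_gt_0_iff by blast
  have cardOmega: "card \<Omega> = card (carrier T) ^ (k - 1)"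
  proof -
    obtain k' where k': "k = Suc k'" using k0 by (metis gr0_implies_Suc)
    have "card \<Omega> * card (carrier T) = card (carrier T) ^ k' * card (carrier T)"
      using cardeq k' by (simp add: mult.commute)
    thus ?thesis using cTpos k' by simp
  qed
  have pT: "p dvd card (carrier T)"
    using prime_dvd_power[OF pp] pd cardOmega by metis
  interpret TG: group T by (rule grpT)
  obtain s where s: "s \<in> carrier T"
    and ps: "p dvd card {t \<otimes>\<^bsub>T\<^esub> s \<otimes>\<^bsub>T\<^esub> inv\<^bsub>T\<^esub> t | t. t \<in> carrier T}"
    using TG.class_div[OF simT ncT finT pp pT] by blast
  define fx where "fx = (\<lambda>i\<in>{..<k}. if i = 0 then \<phi> 0 s else \<one>\<^bsub>T\<^esub>)"
  have fxP: "fx \<in> carrier P" unfolding carrP fx_def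
    by (rule PiE_I) (simp_all add: \<phi>in[OF k0 s])
  obtain x where x: "x \<in> N" "f x = fx" using fsurj fxP by (metis imageE)
  define \<beta> where "\<beta> = x \<alpha>"
  have \<beta>\<Omega>: "\<beta> \<in> \<Omega>" using app_in[OF NGe[OF x(1)] \<alpha>] unfolding \<beta>_def .
  define dt where "dt t = (SOME m. m \<in> Na \<and> f m = diag t)" for t
  have dt: "dt t \<in> Na \<and> f (dt t) = diag t" if "t \<in> carrier T" for t
  proof -
    have "diag t \<in> f ` Na" unfolding fNa Dimg using that by (rule imageI)
    hence "\<exists>m. m \<in> Na \<and> f m = diag t" by (metis imageE)
    thus ?thesis unfolding dt_def by (rule someI_ex)
  qed
  have dtN: "dt t \<in> N" if "t \<in> carrier T" for t using dt[OF that] NaN by (meson subsetD)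
  have diagP: "diag t \<in> carrier P" if "t \<in> carrier T" for t
    unfolding carrP diag_def by (rule PiE_I) (simp_all add: \<phi>in that)
  have Orbimg: "{d \<beta> | d. d \<in> Na} = (\<lambda>t. dt t \<beta>) ` carrier T"
  proof
    show "(\<lambda>t. dt t \<beta>) ` carrier T \<subseteq> {d \<beta> | d. d \<in> Na}" using dt by blast
  next
    show "{d \<beta> | d. d \<in> Na} \<subseteq> (\<lambda>t. dt t \<beta>) ` carrier T"
    proof
      fix z assume "z \<in> {d \<beta> | d. d \<in> Na}"
      then obtain d where d: "d \<in> Na" "z = d \<beta>" by blast
      have "f d \<in> D" using d fNa by blast
      then obtain t where t: "t \<in> carrier T" "f d = diag t" unfolding D_def by blast
      have "f d = f (dt t)" using dt[OF t(1)] t(2) by simp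
      hence "d = dt t" using finj d(1) NaN dtN[OF t(1)] unfolding inj_on_def by blast
      thus "z \<in> (\<lambda>t. dt t \<beta>) ` carrier T" using d t by blast
    qed
  qed
  have Climg: "{t \<otimes>\<^bsub>T\<^esub> s \<otimes>\<^bsub>T\<^esub> inv\<^bsub>T\<^esub> t | t. t \<in> carrier T} = (\<lambda>t. t \<otimes>\<^bsub>T\<^esub> s \<otimes>\<^bsub>T\<^esub> inv\<^bsub>T\<^esub> t) ` carrier T"
    by blast
  have key: "dt t \<beta> = dt t' \<beta> \<longleftrightarrow> t \<otimes>\<^bsub>T\<^esub> s \<otimes>\<^bsub>T\<^esub> inv\<^bsub>T\<^esub> t = t' \<otimes>\<^bsub>T\<^esub> s \<otimes>\<^bsub>T\<^esub> inv\<^bsub>T\<^esub> t'"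
    if t: "t \<in> carrier T" and t': "t' \<in> carrier T" for t t'
  proof -
    define a where "a = dt t"
    define a' where "a' = dt t'"
    have aN: "a \<in> N" and a'N: "a' \<in> N" unfolding a_def a'_def using dtN t t' by auto
    have fa: "f a = diag t" and fa': "f a' = diag t'" unfolding a_def a'_def using dt t t' by auto
    have aG: "a \<in> G" and a'G: "a' \<in> G" and xG: "x \<in> G" using NGe aN a'N x(1) by auto
    have ia'G: "inv\<^bsub>H\<^esub> a' \<in> G" and ixG: "inv\<^bsub>H\<^esub> x \<in> G" using invG a'G xG by auto
    define e where "e = inv\<^bsub>H\<^esub> x \<otimes>\<^bsub>H\<^esub> inv\<^bsub>H\<^esub> a' \<otimes>\<^bsub>H\<^esub> a \<otimes>\<^bsub>H\<^esub> x"
    have eN: "e \<in> N" unfolding e_def using mN invN aN a'N x(1) by auto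
    have x\<alpha>: "x \<alpha> \<in> \<Omega>" using app_in[OF xG \<alpha>] .
    have ax\<alpha>: "a (x \<alpha>) \<in> \<Omega>" using app_in[OF aG x\<alpha>] .
    have Y: "(inv\<^bsub>H\<^esub> a') (a (x \<alpha>)) \<in> \<Omega>" using app_in[OF ia'G ax\<alpha>] .
    have eapp: "e \<alpha> = (inv\<^bsub>H\<^esub> x) ((inv\<^bsub>H\<^esub> a') (a (x \<alpha>)))"
      unfolding e_def
      using app_mult[OF mG[OF mG[OF ixG ia'G] aG] xG \<alpha>] app_mult[OF mG[OF ixG ia'G] aG x\<alpha>]
        app_mult[OF ixG ia'G ax\<alpha>] by simp
    have step1: "a (x \<alpha>) = a' (x \<alpha>) \<longleftrightarrow> e \<alpha> = \<alpha>"
    proof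
      assume "a (x \<alpha>) = a' (x \<alpha>)"
      thus "e \<alpha> = \<alpha>" using eapp app_inv1[OF a'G x\<alpha>] app_inv1[OF xG \<alpha>] by simp
    next
      assume "e \<alpha> = \<alpha>"
      hence "x \<alpha> = x ((inv\<^bsub>H\<^esub> x) ((inv\<^bsub>H\<^esub> a') (a (x \<alpha>))))" using eapp by simp
      also have "\<dots> = (inv\<^bsub>H\<^esub> a') (a (x \<alpha>))" using app_inv2[OF xG Y] .
      finally have "a' (x \<alpha>) = a' ((inv\<^bsub>H\<^esub> a') (a (x \<alpha>)))" by simp
      also have "\<dots> = a (x \<alpha>)" using app_inv2[OF a'G ax\<alpha>] .
      finally show "a (x \<alpha>) = a' (x \<alpha>)" by simp
    qed
    define v where "v = inv\<^bsub>T\<^esub> t' \<otimes>\<^bsub>T\<^esub> t"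
    have vT: "v \<in> carrier T" unfolding v_def using t t' by simp
    have fe: "f e = inv\<^bsub>P\<^esub> fx \<otimes>\<^bsub>P\<^esub> inv\<^bsub>P\<^esub> (diag t') \<otimes>\<^bsub>P\<^esub> diag t \<otimes>\<^bsub>P\<^esub> fx"
      unfolding e_def using fmult finv mN invN aN a'N x fa fa' by simp
    have feval: "f e i = (if i = 0 then \<phi> 0 (inv\<^bsub>T\<^esub> s \<otimes>\<^bsub>T\<^esub> v \<otimes>\<^bsub>T\<^esub> s) else \<phi> i v)"
      if i: "i < k" for i
    proof -
      have "f e i = inv\<^bsub>T\<^esub> (fx i) \<otimes>\<^bsub>T\<^esub> inv\<^bsub>T\<^esub> (\<phi> i t') \<otimes>\<^bsub>T\<^esub> \<phi> i t \<otimes>\<^bsub>T\<^esub> fx i"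
        unfolding fe using i invP[OF fxP] invP[OF diagP[OF t']] by (simp add: multP diag_def)
      also have "\<dots> = (if i = 0 then \<phi> 0 (inv\<^bsub>T\<^esub> s \<otimes>\<^bsub>T\<^esub> v \<otimes>\<^bsub>T\<^esub> s) else \<phi> i v)"
      proof (cases "i = 0")
        case True
        have "inv\<^bsub>T\<^esub> (fx i) \<otimes>\<^bsub>T\<^esub> inv\<^bsub>T\<^esub> (\<phi> i t') \<otimes>\<^bsub>T\<^esub> \<phi> i t \<otimes>\<^bsub>T\<^esub> fx i
              = \<phi> 0 (inv\<^bsub>T\<^esub> s) \<otimes>\<^bsub>T\<^esub> \<phi> 0 (inv\<^bsub>T\<^esub> t') \<otimes>\<^bsub>T\<^esub> \<phi> 0 t \<otimes>\<^bsub>T\<^esub> \<phi> 0 s"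
          using True k0 s t' \<phi>inv unfolding fx_def by simp
        also have "\<dots> = \<phi> 0 (inv\<^bsub>T\<^esub> s \<otimes>\<^bsub>T\<^esub> inv\<^bsub>T\<^esub> t' \<otimes>\<^bsub>T\<^esub> t \<otimes>\<^bsub>T\<^esub> s)"
          using k0 s t t' \<phi>mult by simp
        also have "\<dots> = \<phi> 0 (inv\<^bsub>T\<^esub> s \<otimes>\<^bsub>T\<^esub> v \<otimes>\<^bsub>T\<^esub> s)"
          unfolding v_def using s t t' by (simp add: TG.m_assoc)
        finally show ?thesis using True by simp
      next
        case False
        have "inv\<^bsub>T\<^esub> (fx i) \<otimes>\<^bsub>T\<^esub> inv\<^bsub>T\<^esub> (\<phi> i t') \<otimes>\<^bsub>T\<^esub> \<phi> i t \<otimes>\<^bsub>T\<^esub> fx i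
              = \<phi> i (inv\<^bsub>T\<^esub> t') \<otimes>\<^bsub>T\<^esub> \<phi> i t"
          using False i t t' \<phi>inv \<phi>in unfolding fx_def by simp
        also have "\<dots> = \<phi> i v" unfolding v_def using i t t' \<phi>mult by simp
        finally show ?thesis using False by simp
      qed
      finally show ?thesis .
    qed
    have feP: "f e \<in> carrier P" using fin_in[OF eN] .
    have step4: "f e \<in> D \<longleftrightarrow> inv\<^bsub>T\<^esub> s \<otimes>\<^bsub>T\<^esub> v \<otimes>\<^bsub>T\<^esub> s = v"
    proof
      assume "f e \<in> D"
      then obtain w where w: "w \<in> carrier T" "f e = diag w" unfolding D_def by blast
      have "f e 1 = \<phi> 1 w" using w k1 unfolding diag_def by simp
      hence "\<phi> 1 v = \<phi> 1 w" using feval[OF k1] by simp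
      hence vw: "v = w" by (rule inj_onD[OF \<phi>inj[OF k1] _ vT w(1)])
      have "f e 0 = \<phi> 0 w" using w k0 unfolding diag_def by simp
      hence "\<phi> 0 (inv\<^bsub>T\<^esub> s \<otimes>\<^bsub>T\<^esub> v \<otimes>\<^bsub>T\<^esub> s) = \<phi> 0 v" using feval[OF k0] vw by simp
      moreover have "inv\<^bsub>T\<^esub> s \<otimes>\<^bsub>T\<^esub> v \<otimes>\<^bsub>T\<^esub> s \<in> carrier T" using s vT by simp
      ultimately show "inv\<^bsub>T\<^esub> s \<otimes>\<^bsub>T\<^esub> v \<otimes>\<^bsub>T\<^esub> s = v"
        using inj_onD[OF \<phi>inj[OF k0]] vT by blast
    next
      assume c: "inv\<^bsub>T\<^esub> s \<otimes>\<^bsub>T\<^esub> v \<otimes>\<^bsub>T\<^esub> s = v"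
      have "f e = diag v"
      proof (rule extensionalityI[of _ "{..<k}"])
        have "f e \<in> (\<Pi>\<^sub>E i\<in>{..<k}. carrier T)" using feP carrP by simp
        thus "f e \<in> extensional {..<k}" by (simp add: PiE_iff)
        show "diag v \<in> extensional {..<k}" unfolding diag_def by simp
        fix i assume "i \<in> {..<k}"
        hence ik: "i < k" by simp
        show "f e i = diag v i" using feval[OF ik] c ik unfolding diag_def by simp
      qed
      thus "f e \<in> D" unfolding D_def using vT by blast
    qed
    have "dt t \<beta> = dt t' \<beta> \<longleftrightarrow> inv\<^bsub>T\<^esub> s \<otimes>\<^bsub>T\<^esub> v \<otimes>\<^bsub>T\<^esub> s = v"
      unfolding \<beta>_def a_def[symmetric] a'_def[symmetric] using step1 KM[OF eN] step4 by simp
    also have "\<dots> \<longleftrightarrow> t \<otimes>\<^bsub>T\<^esub> s \<otimes>\<^bsub>T\<^esub> inv\<^bsub>T\<^esub> t = t' \<otimes>\<^bsub>T\<^esub> s \<otimes>\<^bsub>T\<^esub> inv\<^bsub>T\<^esub> t'"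
      unfolding v_def using TG.conj_eq_iff[OF t t' s] by simp
    finally show ?thesis .
  qed
  define Ob where "Ob \<gamma> = {d \<gamma> | d. d \<in> Na}" for \<gamma>
  have cardOb\<beta>: "card (Ob \<beta>) = card {t \<otimes>\<^bsub>T\<^esub> s \<otimes>\<^bsub>T\<^esub> inv\<^bsub>T\<^esub> t | t. t \<in> carrier T}"
    unfolding Ob_def Orbimg Climg by (rule card_eq_via) (use key in blast)
  have pOb: "p dvd card (Ob \<beta>)" using ps cardOb\<beta> by simp
  have NaI: "d \<in> Na" if "d \<in> N" "d \<alpha> = \<alpha>" for d using that unfolding Na_def by simp
  have NaD: "d \<in> N" "d \<alpha> = \<alpha>" if "d \<in> Na" for d using that unfolding Na_def by simp_all
  have oneNa: "\<one>\<^bsub>H\<^esub> \<in> Na" using NaI[OF oneN app_one[OF \<alpha>]] .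
  have invNa: "inv\<^bsub>H\<^esub> d \<in> Na" if d: "d \<in> Na" for d
  proof -
    have "(inv\<^bsub>H\<^esub> d) \<alpha> = (inv\<^bsub>H\<^esub> d) (d \<alpha>)" using NaD[OF d] by simp
    also have "\<dots> = \<alpha>" using app_inv1[OF NGe[OF NaD(1)[OF d]] \<alpha>] .
    finally show ?thesis using NaI invN NaD(1)[OF d] by blast
  qed
  have mNa: "d1 \<otimes>\<^bsub>H\<^esub> d2 \<in> Na" if d1: "d1 \<in> Na" and d2: "d2 \<in> Na" for d1 d2
  proof -
    have "(d1 \<otimes>\<^bsub>H\<^esub> d2) \<alpha> = d1 (d2 \<alpha>)" using app_mult[OF NGe[OF NaD(1)[OF d1]] NGe[OF NaD(1)[OF d2]] \<alpha>] .
    also have "\<dots> = \<alpha>" using NaD[OF d1] NaD[OF d2] by simp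
    finally show ?thesis using NaI mN NaD(1)[OF d1] NaD(1)[OF d2] by blast
  qed
  have NaG: "d \<in> G" if "d \<in> Na" for d using NGe NaD(1)[OF that] by blast
  define Os where "Os = {g \<beta> | g. g \<in> G \<and> g \<alpha> = \<alpha>}"
  have Os\<Omega>: "Os \<subseteq> \<Omega>" unfolding Os_def using app_in \<beta>\<Omega> by blast
  have finOs: "finite Os" using finite_subset[OF Os\<Omega> fin] .
  have Ob\<Omega>: "Ob \<gamma> \<subseteq> \<Omega>" if "\<gamma> \<in> \<Omega>" for \<gamma> unfolding Ob_def using app_in NaG that by blast
  have \<gamma>Ob: "\<gamma> \<in> Ob \<gamma>" if "\<gamma> \<in> \<Omega>" for \<gamma>
  proof -
    have "\<gamma> = \<one>\<^bsub>H\<^esub> \<gamma> \<and> \<one>\<^bsub>H\<^esub> \<in> Na" using app_one[OF that] oneNa by simp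
    thus ?thesis unfolding Ob_def by blast
  qed
  have ObOs: "Ob \<gamma> \<subseteq> Os" if \<gamma>Os: "\<gamma> \<in> Os" for \<gamma>
  proof
    fix z assume "z \<in> Ob \<gamma>"
    then obtain d where d: "d \<in> Na" "z = d \<gamma>" unfolding Ob_def by blast
    obtain g where g: "g \<in> G" "g \<alpha> = \<alpha>" "\<gamma> = g \<beta>" using \<gamma>Os unfolding Os_def by blast
    have "(d \<otimes>\<^bsub>H\<^esub> g) \<beta> = z" using app_mult[OF NaG[OF d(1)] g(1) \<beta>\<Omega>] d g by simp
    moreover have "(d \<otimes>\<^bsub>H\<^esub> g) \<alpha> = \<alpha>" using app_mult[OF NaG[OF d(1)] g(1) \<alpha>] g NaD(2)[OF d(1)] by simp
    moreover have "d \<otimes>\<^bsub>H\<^esub> g \<in> G" using mG[OF NaG[OF d(1)] g(1)] .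
    ultimately show "z \<in> Os" unfolding Os_def by blast
  qed
  have Obshift: "Ob (g \<beta>) = g ` Ob \<beta>" if g: "g \<in> G" "g \<alpha> = \<alpha>" for g
  proof -
    have ig\<alpha>: "(inv\<^bsub>H\<^esub> g) \<alpha> = \<alpha>"
    proof -
      have "(inv\<^bsub>H\<^esub> g) \<alpha> = (inv\<^bsub>H\<^esub> g) (g \<alpha>)" using g by simp
      also have "\<dots> = \<alpha>" using app_inv1[OF g(1) \<alpha>] .
      finally show ?thesis .
    qed
    have s1: "Ob (g \<beta>) \<subseteq> g ` Ob \<beta>"
    proof
      fix z assume "z \<in> Ob (g \<beta>)"
      then obtain d where d: "d \<in> Na" "z = d (g \<beta>)" unfolding Ob_def by blast
      define c where "c = inv\<^bsub>H\<^esub> g \<otimes>\<^bsub>H\<^esub> d \<otimes>\<^bsub>H\<^esub> g"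
      have cN: "c \<in> N" unfolding c_def using norm1[OF g(1) NaD(1)[OF d(1)]] .
      have capp: "c y = (inv\<^bsub>H\<^esub> g) (d (g y))" if "y \<in> \<Omega>" for y
        unfolding c_def using app_mult[OF mG[OF invG[OF g(1)] NaG[OF d(1)]] g(1) that]
          app_mult[OF invG[OF g(1)] NaG[OF d(1)] app_in[OF g(1) that]] by simp
      have "c \<alpha> = \<alpha>" using capp[OF \<alpha>] g(2) NaD(2)[OF d(1)] ig\<alpha> by simp
      hence cNa: "c \<in> Na" using NaI cN by blast
      have dg\<beta>: "d (g \<beta>) \<in> \<Omega>" using app_in[OF NaG[OF d(1)] app_in[OF g(1) \<beta>\<Omega>]] .
      have "g (c \<beta>) = d (g \<beta>)" using capp[OF \<beta>\<Omega>] app_inv2[OF g(1) dg\<beta>] by simp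
      hence "z = g (c \<beta>)" using d by simp
      moreover have "c \<beta> \<in> Ob \<beta>" unfolding Ob_def using cNa by blast
      ultimately show "z \<in> g ` Ob \<beta>" by blast
    qed
    have s2: "g ` Ob \<beta> \<subseteq> Ob (g \<beta>)"
    proof
      fix z assume "z \<in> g ` Ob \<beta>"
      then obtain d where d: "d \<in> Na" "z = g (d \<beta>)" unfolding Ob_def by blast
      define c where "c = g \<otimes>\<^bsub>H\<^esub> d \<otimes>\<^bsub>H\<^esub> inv\<^bsub>H\<^esub> g"
      have cN: "c \<in> N" unfolding c_def using norm2[OF g(1) NaD(1)[OF d(1)]] .
      have capp: "c y = g (d ((inv\<^bsub>H\<^esub> g) y))" if "y \<in> \<Omega>" for y
        unfolding c_def using app_mult[OF mG[OF g(1) NaG[OF d(1)]] invG[OF g(1)] that]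
          app_mult[OF g(1) NaG[OF d(1)] app_in[OF invG[OF g(1)] that]] by simp
      have "c \<alpha> = \<alpha>" using capp[OF \<alpha>] g(2) NaD(2)[OF d(1)] ig\<alpha> by simp
      hence cNa: "c \<in> Na" using NaI cN by blast
      have "c (g \<beta>) = g (d \<beta>)" using capp[OF app_in[OF g(1) \<beta>\<Omega>]] app_inv1[OF g(1) \<beta>\<Omega>] by simp
      hence "z = c (g \<beta>)" using d by simp
      thus "z \<in> Ob (g \<beta>)" unfolding Ob_def using cNa by blast
    qed
    show ?thesis using s1 s2 by (rule equalityI)
  qed
  have cardOb: "card (Ob \<gamma>) = card (Ob \<beta>)" if \<gamma>Os: "\<gamma> \<in> Os" for \<gamma>
  proof -
    obtain g where g: "g \<in> G" "g \<alpha> = \<alpha>" "\<gamma> = g \<beta>" using \<gamma>Os unfolding Os_def by blast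
    have "card (g ` Ob \<beta>) = card (Ob \<beta>)"
      using card_image[OF inj_on_subset[OF app_inj[OF g(1)] Ob\<Omega>[OF \<beta>\<Omega>]]] .
    thus ?thesis using Obshift[OF g(1,2)] g(3) by simp
  qed
  have Obsub: "Ob \<gamma>1 \<subseteq> Ob \<gamma>2" if "\<gamma>1 \<in> \<Omega>" "\<gamma>2 \<in> \<Omega>" "d1 \<in> Na" "d2 \<in> Na" "d1 \<gamma>1 = d2 \<gamma>2"
    for \<gamma>1 \<gamma>2 d1 d2
  proof
    fix z assume "z \<in> Ob \<gamma>1"
    then obtain d where d: "d \<in> Na" "z = d \<gamma>1" unfolding Ob_def by blast
    define c where "c = d \<otimes>\<^bsub>H\<^esub> inv\<^bsub>H\<^esub> d1 \<otimes>\<^bsub>H\<^esub> d2"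
    have cNa: "c \<in> Na" unfolding c_def using mNa invNa d that by blast
    have d2g: "d2 \<gamma>2 \<in> \<Omega>" using app_in[OF NaG[OF that(4)] that(2)] .
    have "c \<gamma>2 = d ((inv\<^bsub>H\<^esub> d1) (d2 \<gamma>2))"
      unfolding c_def using app_mult[OF mG[OF NaG[OF d(1)] invG[OF NaG[OF that(3)]]] NaG[OF that(4)] that(2)]
        app_mult[OF NaG[OF d(1)] invG[OF NaG[OF that(3)]] d2g] by simp
    also have "\<dots> = d \<gamma>1" using that(5)[symmetric] app_inv1[OF NaG[OF that(3)] that(1)] by simp
    finally have "z = c \<gamma>2" using d by simp
    thus "z \<in> Ob \<gamma>2" unfolding Ob_def using cNa by blast
  qed
  have "card (Ob \<beta>) * card (Ob ` Os) = card (\<Union> (Ob ` Os))"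
  proof (rule card_partition)
    show "finite (Ob ` Os)" using finOs by simp
    show "finite (\<Union> (Ob ` Os))" using ObOs by (intro finite_subset[OF _ finOs]) blast
    show "\<And>c. c \<in> Ob ` Os \<Longrightarrow> card c = card (Ob \<beta>)" using cardOb by blast
    show "\<And>c1 c2. c1 \<in> Ob ` Os \<Longrightarrow> c2 \<in> Ob ` Os \<Longrightarrow> c1 \<noteq> c2 \<Longrightarrow> c1 \<inter> c2 = {}"
    proof -
      fix c1 c2 assume c1: "c1 \<in> Ob ` Os" and c2: "c2 \<in> Ob ` Os" and ne: "c1 \<noteq> c2"
      then obtain \<gamma>1 \<gamma>2 where g1: "\<gamma>1 \<in> Os" "c1 = Ob \<gamma>1" and g2: "\<gamma>2 \<in> Os" "c2 = Ob \<gamma>2" by blast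
      have o1: "\<gamma>1 \<in> \<Omega>" and o2: "\<gamma>2 \<in> \<Omega>" using g1 g2 Os\<Omega> by auto
      show "c1 \<inter> c2 = {}"
      proof (rule ccontr)
        assume "c1 \<inter> c2 \<noteq> {}"
        then obtain z where "z \<in> Ob \<gamma>1" "z \<in> Ob \<gamma>2" using g1 g2 by blast
        then obtain d1 d2 where d: "d1 \<in> Na" "d2 \<in> Na" "d1 \<gamma>1 = d2 \<gamma>2" unfolding Ob_def by blast
        have "Ob \<gamma>1 \<subseteq> Ob \<gamma>2" using Obsub[OF o1 o2 d] .
        moreover have "Ob \<gamma>2 \<subseteq> Ob \<gamma>1" using Obsub[OF o2 o1 d(2) d(1) d(3)[symmetric]] .
        ultimately show False using ne g1 g2 by blast
      qed
    qed
  qed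
  moreover have "\<Union> (Ob ` Os) = Os" using ObOs \<gamma>Ob Os\<Omega> by blast
  ultimately have "card (Ob \<beta>) dvd card Os" by (metis dvd_triv_left)
  hence "p dvd card Os" using pOb dvd_trans by blast
  hence "p dvd subdegree G \<alpha> \<beta>" unfolding subdegree_def Os_def .
  thus ?thesis using \<alpha> \<beta>\<Omega> by blast
qed

end
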